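(* Let $X\in\mathbb{R}^{n\times p}$ with columns $X_1,\ldots,X_p\in\mathbb{R}^n$, $S=\frac1nX^TX$, and $\lambda_1,\lambda_2>0$. Assume $np < p(p-1)/2$. Let $A\in\mathbb{R}^{np\times p(p-1)/2}$ be the matrix whose rows are partitioned into $p$ blocks of $n$ rows each and whose columns are indexed by pairs $(k,\ell)$, $1\le k<\ell\le p$, in the order $(1,2),(1,3),\ldots,(1,p),(2,3),\ldots,(p-1,p)$; the column indexed by $(k,\ell)$ equals $-X_\ell$ in row block $k$, $-X_k$ in row block $\ell$, and $0$ in all other blocks. Let $\hat\Omega^{\mathrm{net}}$ be the minimizer over $\Omega\in\mathbb{R}^{p\times p}$ of $-\tfrac12\log\det(\Omega_{\mathrm{diag}}^2)+\tfrac n2\operatorname{Tr}(S\Omega^2)+\lambda_1\|\Omega_{\mathrm{off}}\|_1+\tfrac{\lambda_2}{2}\|\Omega\|_F^2$, and call any minimizer over symmetric $\Omega\in\mathbb{R}^{p\times p}$ of $-\tfrac12\log\det(\Omega_{\mathrm{diag}}^2)+\tfrac n2\operatorname{Tr}(S\Omega^2)+\lambda_1\|\Omega_{\mathrm{off}}\|_1$ a CONCORD estimate. Then $\operatorname{card}\operatorname{vech}\hat\Omega^{\mathrm{net}}\le p(p-1)/2$ (the PseudoNet estimate does not saturate); there exists a CONCORD estimate $\hat\Omega^{\mathrm{conc}}$ with $\operatorname{card}\operatorname{vech}\hat\Omega^{\mathrm{conc}}\le np$; and if the columns of $A$ are in general position, then every CONCORD estimate $\hat\Omega^{\mathrm{conc}}$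 satisfies $\operatorname{card}\operatorname{vech}\hat\Omega^{\mathrm{conc}}\le np$.
   Context: $\Omega_{\mathrm{diag}}$ keeps the diagonal of $\Omega$ and zeroes the rest; $\Omega_{\mathrm{off}}$ keeps the off-diagonal entries and zeroes the diagonal; $\|\cdot\|_1$ is the elementwise $\ell_1$ norm and $\|\cdot\|_F$ the Frobenius norm. $\operatorname{vech}$ is the half-vectorization: the vector in $\mathbb{R}^{p(p-1)/2}$ of the strictly lower-triangular entries of its matrix argument (diagonal excluded). $\operatorname{card}$ counts nonzero entries. The columns of a matrix $A\in\mathbb{R}^{k\times m}$ with $m>k$ are in general position if for any $r\le k$ columns $A_{i_1},\ldots,A_{i_r}$ and any signs $s_{i_1},\ldots,s_{i_r}\in\{+1,-1\}$, the affine span of $s_{i_1}A_{i_1},\ldots,s_{i_r}A_{i_r}$ contains none of the points $\pm A_j$, $j\notin\{i_1,\ldots,i_r\}$. *)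

theory Defs
  imports "Jordan_Normal_Form.Determinant"
begin

text \<open>Matrices are Jordan_Normal_Form matrices; indices are 0-based.
  X is n x p (n = dim_row X, p = dim_col X), Omega is p x p.\<close>

definition mtrace :: "real mat \<Rightarrow> real" where
  "mtrace M = (\<Sum>i<dim_row M. M $$ (i, i))"

definition Sigma_hat :: "real mat \<Rightarrow> real mat" where
  "Sigma_hat X = (1 / real (dim_row X)) \<cdot>\<^sub>m (transpose_mat X * X)"

definition diag_part :: "real mat \<Rightarrow> real mat" where
  "diag_part Om = mat (dim_row Om) (dim_col Om) (\<lambda>(i, j). if i = j then Om $$ (i, j) else 0)"

definition off_part :: "real mat \<Rightarrow> real mat" where
  "off_part Om = mat (dim_row Om) (dim_col Om) (\<lambda>(i, j). if i = j then 0 else Om $$ (i, j))"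

definition l1_norm_mat :: "real mat \<Rightarrow> real" where
  "l1_norm_mat M = (\<Sum>i<dim_row M. \<Sum>j<dim_col M. \<bar>M $$ (i, j)\<bar>)"

definition frob_norm :: "real mat \<Rightarrow> real" where
  "frob_norm M = sqrt (\<Sum>i<dim_row M. \<Sum>j<dim_col M. (M $$ (i, j))\<^sup>2)"

text \<open>CONCORD objective (without the ridge term); finite exactly when det (Omega_diag^2) > 0,
  otherwise it is +infinity (the log-det term is -log 0).\<close>
definition concord_obj :: "real mat \<Rightarrow> real \<Rightarrow> real mat \<Rightarrow> real" where
  "concord_obj X lam1 Om =
     - (1/2) * ln (det (diag_part Om * diag_part Om))
     + real (dim_row X) / 2 * mtrace (Sigma_hat X * Om * Om)
     + lam1 * l1_norm_mat (off_part Om)"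

definition pseudonet_obj :: "real mat \<Rightarrow> real \<Rightarrow> real \<Rightarrow> real mat \<Rightarrow> real" where
  "pseudonet_obj X lam1 lam2 Om = concord_obj X lam1 Om + lam2 / 2 * (frob_norm Om)\<^sup>2"

definition admissible :: "nat \<Rightarrow> real mat \<Rightarrow> bool" where
  "admissible p Om \<longleftrightarrow> Om \<in> carrier_mat p p \<and> det (diag_part Om * diag_part Om) > 0"

definition is_pseudonet :: "real mat \<Rightarrow> real \<Rightarrow> real \<Rightarrow> real mat \<Rightarrow> bool" where
  "is_pseudonet X lam1 lam2 Om \<longleftrightarrow> admissible (dim_col X) Om \<and>
     (\<forall>Om'. admissible (dim_col X) Om' \<longrightarrow>
        pseudonet_obj X lam1 lam2 Om \<le> pseudonet_obj X lam1 lam2 Om')"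

definition is_concord :: "real mat \<Rightarrow> real \<Rightarrow> real mat \<Rightarrow> bool" where
  "is_concord X lam1 Om \<longleftrightarrow> admissible (dim_col X) Om \<and> transpose_mat Om = Om \<and>
     (\<forall>Om'. admissible (dim_col X) Om' \<and> transpose_mat Om' = Om' \<longrightarrow>
        concord_obj X lam1 Om \<le> concord_obj X lam1 Om')"

definition vech :: "real mat \<Rightarrow> real vec" where
  "vech Om = vec_of_list [Om $$ (i, j). i \<leftarrow> [0..<dim_row Om], j \<leftarrow> [0..<i]]"

definition card_vec :: "real vec \<Rightarrow> nat" where
  "card_vec v = card {i. i < dim_vec v \<and> v $ i \<noteq> 0}"

definition pair_list :: "nat \<Rightarrow> (nat \<times> nat) list" where
  "pair_list p = [(k, l). k \<leftarrow> [0..<p], l \<leftarrow> [Suc k..<p]]"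

definition A_mat :: "real mat \<Rightarrow> real mat" where
  "A_mat X = (let n = dim_row X; p = dim_col X in
     mat (n * p) (length (pair_list p)) (\<lambda>(r, c).
       let (k, l) = pair_list p ! c; b = r div n; i = r mod n in
       if b = k then - X $$ (i, l) else if b = l then - X $$ (i, k) else 0))"

definition general_position :: "real mat \<Rightarrow> bool" where
  "general_position A \<longleftrightarrow>
     (\<forall>I s j (\<sigma>::real). I \<subseteq> {..<dim_col A} \<and> card I \<le> dim_row A \<and>
        (\<forall>i\<in>I. s i = 1 \<or> s i = (-1::real)) \<and> j < dim_col A \<and> j \<notin> I \<and>
        (\<sigma> = 1 \<or> \<sigma> = -1) \<longrightarrow>
        \<not> (\<exists>c. (\<Sum>i\<in>I. c i) = (1::real) \<and>
              (\<forall>r<dim_row A. \<sigma> * A $$ (r, j) = (\<Sum>i\<in>I. c i * (s i * A $$ (r, i))))))"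

end

theory Submission
  imports Defs
begin


lemma obj_formula:
  fixes X Om :: "real mat"
  assumes X: "X \<in> carrier_mat n p" and n: "n > 0" and Om: "Om \<in> carrier_mat p p"
    and sym: "\<And>a b. a < p \<Longrightarrow> b < p \<Longrightarrow> Om $$ (a,b) = Om $$ (b,a)"
  shows "concord_obj X lam1 Om = - (1/2) * ln (det (diag_part Om * diag_part Om))
     + (1/2) * (\<Sum>b<p. \<Sum>i<n. (\<Sum>a<p. X $$ (i,a) * Om $$ (a,b))\<^sup>2)
     + lam1 * (\<Sum>a<p. \<Sum>b<p. if a = b then 0 else \<bar>Om $$ (a,b)\<bar>)"
proof -
  have S: "Sigma_hat X $$ (a,c) = (1/n) * (\<Sum>i<n. X $$ (i,a) * X $$ (i,c))" if "a < p" "c < p" for a c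
    using X that unfolding Sigma_hat_def by (simp add: scalar_prod_def atLeast0LessThan)
  have dS: "Sigma_hat X \<in> carrier_mat p p" using X unfolding Sigma_hat_def by simp
  have SO: "(Sigma_hat X * Om * Om) $$ (a,a) = (\<Sum>c<p. Sigma_hat X $$ (a,c) * (\<Sum>b<p. Om $$ (c,b) * Om $$ (b,a)))" if "a < p" for a
    using dS Om that by (simp add: scalar_prod_def atLeast0LessThan)
  have tr: "mtrace (Sigma_hat X * Om * Om) = (\<Sum>a<p. \<Sum>c<p. Sigma_hat X $$ (a,c) * (\<Sum>b<p. Om $$ (c,b) * Om $$ (b,a)))"
    unfolding mtrace_def using dS SO by simp
  have "real n / 2 * mtrace (Sigma_hat X * Om * Om) = (1/2) * (\<Sum>a<p. \<Sum>c<p. \<Sum>b<p. \<Sum>i<n. X $$ (i,a) * X $$ (i,c) * Om $$ (c,b) * Om $$ (b,a))"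
  proof -
    have "real n / 2 * mtrace (Sigma_hat X * Om * Om) = real n / 2 * (\<Sum>a<p. \<Sum>c<p. ((1/n) * (\<Sum>i<n. X $$ (i,a) * X $$ (i,c))) * (\<Sum>b<p. Om $$ (c,b) * Om $$ (b,a)))"
      unfolding tr by (intro arg_cong[where f="\<lambda>x. real n / 2 * x"] sum.cong refl) (simp add: S)
    also have "\<dots> = (1/2) * (\<Sum>a<p. \<Sum>c<p. (\<Sum>i<n. X $$ (i,a) * X $$ (i,c)) * (\<Sum>b<p. Om $$ (c,b) * Om $$ (b,a)))"
    proof -
      have "(\<Sum>a<p. \<Sum>c<p. ((1/n) * Y a c) * Z a c) = (1/n) * (\<Sum>a<p. \<Sum>c<p. Y a c * Z a c)" for Y Z :: "nat \<Rightarrow> nat \<Rightarrow> real"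
        by (simp add: sum_distrib_left mult.assoc)
      then show ?thesis using n by simp
    qed
    also have "\<dots> = (1/2) * (\<Sum>a<p. \<Sum>c<p. \<Sum>b<p. \<Sum>i<n. X $$ (i,a) * X $$ (i,c) * Om $$ (c,b) * Om $$ (b,a))"
      by (simp add: sum_distrib_left sum_distrib_right mult.assoc sum.swap[of _ "{..<n}"])
    finally show ?thesis .
  qed
  also have "\<dots> = (1/2) * (\<Sum>a<p. \<Sum>c<p. \<Sum>b<p. \<Sum>i<n. X $$ (i,a) * X $$ (i,c) * Om $$ (c,b) * Om $$ (a,b))"
    using sym by (intro arg_cong[where f="\<lambda>x. (1/2) * x"] sum.cong refl) auto
  also have "\<dots> = (1/2) * (\<Sum>b<p. \<Sum>i<n. \<Sum>a<p. \<Sum>c<p. X $$ (i,a) * X $$ (i,c) * Om $$ (c,b) * Om $$ (a,b))"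
  proof -
    have "(\<Sum>a<p. \<Sum>c<p. \<Sum>b<p. \<Sum>i<n. f a b c i) = (\<Sum>b<p. \<Sum>i<n. \<Sum>a<p. \<Sum>c<p. f a b c i)" for f :: "nat \<Rightarrow> nat \<Rightarrow> nat \<Rightarrow> nat \<Rightarrow> real"
    proof -
      have "(\<Sum>a<p. \<Sum>c<p. \<Sum>b<p. \<Sum>i<n. f a b c i) = (\<Sum>a<p. \<Sum>b<p. \<Sum>c<p. \<Sum>i<n. f a b c i)"
        by (intro sum.cong refl sum.swap)
      also have "\<dots> = (\<Sum>b<p. \<Sum>a<p. \<Sum>c<p. \<Sum>i<n. f a b c i)"
        by (rule sum.swap)
      also have "\<dots> = (\<Sum>b<p. \<Sum>a<p. \<Sum>i<n. \<Sum>c<p. f a b c i)"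
        by (intro sum.cong refl sum.swap)
      also have "\<dots> = (\<Sum>b<p. \<Sum>i<n. \<Sum>a<p. \<Sum>c<p. f a b c i)"
        by (intro sum.cong refl sum.swap)
      finally show ?thesis .
    qed
    then show ?thesis by simp
  qed
  also have "\<dots> = (1/2) * (\<Sum>b<p. \<Sum>i<n. (\<Sum>a<p. X $$ (i,a) * Om $$ (a,b))\<^sup>2)"
    by (simp add: power2_eq_square sum_product mult.assoc mult.left_commute mult.commute)
  finally have trm: "real n / 2 * mtrace (Sigma_hat X * Om * Om) = (1/2) * (\<Sum>b<p. \<Sum>i<n. (\<Sum>a<p. X $$ (i,a) * Om $$ (a,b))\<^sup>2)" .
  have l1: "l1_norm_mat (off_part Om) = (\<Sum>a<p. \<Sum>b<p. if a = b then 0 else \<bar>Om $$ (a,b)\<bar>)"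
    unfolding l1_norm_mat_def off_part_def using Om by (intro sum.cong) auto
  have dX: "dim_row X = n" using X by simp
  show ?thesis unfolding concord_obj_def dX trm l1 by simp
qed

lemma pl_set: "set (pair_list p) = {(k,l). k < l \<and> l < p}"
  unfolding pair_list_def by force

lemma distinct_concat_map:
  "distinct xs \<Longrightarrow> (\<forall>x\<in>set xs. distinct (f x)) \<Longrightarrow>
   (\<forall>x y. x\<in>set xs \<longrightarrow> y\<in> set xs \<longrightarrow> x\<noteq>y \<longrightarrow> set (f x) \<inter> set (f y) = {}) \<Longrightarrow> distinct (concat (map f xs))"
  by (induction xs) auto

lemma pl_distinct: "distinct (pair_list p)"
  unfolding pair_list_def by (rule distinct_concat_map) (auto simp: distinct_map inj_on_def)

lemma offdiag_sum:
  fixes g :: "nat \<times> nat \<Rightarrow> real"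
  assumes sym: "\<And>a b. a < p \<Longrightarrow> b < p \<Longrightarrow> g (a,b) = g (b,a)"
  shows "(\<Sum>a<p. \<Sum>b<p. if a = b then 0 else g (a,b)) = 2 * (\<Sum>c<length (pair_list p). g (pair_list p ! c))"
proof -
  define U where "U = {(a,b). a < b \<and> b < (p::nat)}"
  define W where "W = {(a,b). b < a \<and> a < (p::nat)}"
  have fin: "finite U" "finite W"
    by (rule finite_subset[of _ "{..<p} \<times> {..<p}"], auto simp: U_def W_def)+
  have "(\<Sum>a<p. \<Sum>b<p. if a = b then 0 else g (a,b)) = (\<Sum>x\<in>{..<p} \<times> {..<p}. if fst x = snd x then 0 else g x)"
    unfolding sum.cartesian_product by (intro sum.cong refl) (auto simp: case_prod_beta)
  also have "\<dots> = (\<Sum>x\<in>U \<union> W. if fst x = snd x then 0 else g x)"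
    by (rule sum.mono_neutral_right) (auto simp: U_def W_def)
  also have "\<dots> = (\<Sum>x\<in>U. g x) + (\<Sum>x\<in>W. g x)"
  proof -
    have d: "U \<inter> W = {}" by (auto simp: U_def W_def)
    have "(\<Sum>x\<in>U. if fst x = snd x then 0 else g x) = (\<Sum>x\<in>U. g x)"
      by (rule sum.cong) (auto simp: U_def)
    moreover have "(\<Sum>x\<in>W. if fst x = snd x then 0 else g x) = (\<Sum>x\<in>W. g x)"
      by (rule sum.cong) (auto simp: W_def)
    ultimately show ?thesis using sum.union_disjoint[OF fin d, of "\<lambda>x. if fst x = snd x then 0 else g x"] by simp
  qed
  also have "(\<Sum>x\<in>W. g x) = (\<Sum>x\<in>U. g x)"
  proof -
    have "W = prod.swap ` U" by (auto simp: U_def W_def image_iff)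
    then have "(\<Sum>x\<in>W. g x) = (\<Sum>x\<in>U. g (prod.swap x))"
    proof -
      have inj: "inj_on prod.swap U" by (rule inj_onI) (metis swap_swap)
      show ?thesis using sum.reindex[OF inj, of g] \<open>W = prod.swap ` U\<close> by (simp add: comp_def)
    qed
    also have "\<dots> = (\<Sum>x\<in>U. g x)" using sym by (intro sum.cong) (auto simp: prod.swap_def case_prod_beta U_def)
    finally show ?thesis .
  qed
  also have "(\<Sum>x\<in>U. g x) = sum_list (map g (pair_list p))"
    unfolding U_def pl_set[symmetric] by (rule sum.distinct_set_conv_list[OF pl_distinct])
  also have "\<dots> = (\<Sum>c<length (pair_list p). g (pair_list p ! c))"
    by (simp add: sum_list_sum_nth atLeast0LessThan)
  finally show ?thesis by simp
qed

lemma pl_nth: "c < length (pair_list p) \<Longrightarrow> fst (pair_list p ! c) < snd (pair_list p ! c) \<and> snd (pair_list p ! c) < p"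
  using nth_mem[of c "pair_list p"] pl_set[of p] by auto

definition Vf :: "nat \<Rightarrow> nat set \<Rightarrow> (nat \<Rightarrow> real) \<Rightarrow> nat \<Rightarrow> nat \<Rightarrow> real" where
  "Vf p C u a b = (\<Sum>c\<in>C. u c * ((if pair_list p ! c = (a,b) then 1 else 0) + (if pair_list p ! c = (b,a) then 1 else 0)))"

definition pert :: "nat \<Rightarrow> real mat \<Rightarrow> real \<Rightarrow> nat set \<Rightarrow> (nat \<Rightarrow> real) \<Rightarrow> real mat" where
  "pert p Om t C u = mat p p (\<lambda>(a,b). Om $$ (a,b) + t * Vf p C u a b)"

lemma Vf_sym: "Vf p C u a b = Vf p C u b a"
  unfolding Vf_def by (intro sum.cong refl) auto

lemma Vf_diag: "C \<subseteq> {..<length (pair_list p)} \<Longrightarrow> Vf p C u a a = 0"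
  unfolding Vf_def by (intro sum.neutral) (use pl_nth in fastforce)

lemma Vf_pl:
  assumes C: "C \<subseteq> {..<length (pair_list p)}" and c': "c' < length (pair_list p)"
  shows "Vf p C u (fst (pair_list p ! c')) (snd (pair_list p ! c')) = (if c' \<in> C then u c' else 0)"
proof -
  have "Vf p C u (fst (pair_list p ! c')) (snd (pair_list p ! c')) = (\<Sum>c\<in>C. if c = c' then u c else 0)"
    unfolding Vf_def
  proof (intro sum.cong refl)
    fix c assume "c \<in> C"
    then have c: "c < length (pair_list p)" using C by auto
    have e: "pair_list p ! c = pair_list p ! c' \<longleftrightarrow> c = c'"
      using nth_eq_iff_index_eq[OF pl_distinct c c'] .
    have ne: "pair_list p ! c \<noteq> prod.swap (pair_list p ! c')"
      using pl_nth[OF c] pl_nth[OF c'] by (metis fst_swap less_asym snd_swap)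
    show "u c * ((if pair_list p ! c = (fst (pair_list p ! c'), snd (pair_list p ! c')) then 1 else 0) +
          (if pair_list p ! c = (snd (pair_list p ! c'), fst (pair_list p ! c')) then 1 else 0)) = (if c = c' then u c else 0)"
      using e ne by (auto simp: prod.swap_def)
  qed
  also have "\<dots> = (if c' \<in> C then u c' else 0)"
    using C by (simp add: sum.delta' finite_subset[OF C])
  finally show ?thesis .
qed

lemma pert_carrier: "pert p Om t C u \<in> carrier_mat p p"
  unfolding pert_def by simp

lemma pert_sym:
  assumes Om: "Om \<in> carrier_mat p p" and sym: "transpose_mat Om = Om"
  shows "transpose_mat (pert p Om t C u) = pert p Om t C u"
proof (rule eq_matI)
  fix i j assume "i < dim_row (pert p Om t C u)" "j < dim_col (pert p Om t C u)"
  then have ij: "i < p" "j < p" by (auto simp: pert_def)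
  have "Om $$ (j,i) = Om $$ (i,j)" using sym ij Om by (metis carrier_matD index_transpose_mat(1))
  then show "transpose_mat (pert p Om t C u) $$ (i, j) = pert p Om t C u $$ (i, j)"
    using ij by (simp add: pert_def Vf_sym[of p C u j i])
qed (auto simp: pert_def)

lemma pert_diag:
  assumes Om: "Om \<in> carrier_mat p p" and C: "C \<subseteq> {..<length (pair_list p)}"
  shows "diag_part (pert p Om t C u) = diag_part Om"
  using Om by (intro eq_matI) (auto simp: pert_def diag_part_def Vf_diag[OF C])

lemma pert_pl:
  assumes C: "C \<subseteq> {..<length (pair_list p)}" and c': "c' < length (pair_list p)"
  shows "pert p Om t C u $$ (pair_list p ! c') = Om $$ (pair_list p ! c') + t * (if c' \<in> C then u c' else 0)"
proof -
  obtain k l where kl: "pair_list p ! c' = (k,l)" by fastforce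
  with pl_nth[OF c'] have "k < p" "l < p" by auto
  then show ?thesis using Vf_pl[OF C c', of u] kl by (simp add: pert_def)
qed

lemma A_entry:
  assumes X: "X \<in> carrier_mat n p" and r: "r < n * p" and c: "c < length (pair_list p)"
  shows "A_mat X $$ (r,c) = (if r div n = fst (pair_list p ! c) then - X $$ (r mod n, snd (pair_list p ! c))
     else if r div n = snd (pair_list p ! c) then - X $$ (r mod n, fst (pair_list p ! c)) else 0)"
  using X r c unfolding A_mat_def by (simp add: Let_def case_prod_beta)

lemma A_dims: "X \<in> carrier_mat n p \<Longrightarrow> dim_row (A_mat X) = n * p \<and> dim_col (A_mat X) = length (pair_list p)"
  unfolding A_mat_def by (simp add: Let_def)


lemma sum_tri: "2 * (\<Sum>k<p. p - Suc k) = p * (p - 1)"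
proof (induction p)
  case 0 then show ?case by simp
next
  case (Suc p)
  have "(\<Sum>k<Suc p. Suc p - Suc k) = (\<Sum>k<p. p - Suc k + 1)"
    by (simp add: Suc_diff_Suc)
  also have "\<dots> = (\<Sum>k<p. p - Suc k) + p" by (simp only: sum.distrib) simp
  finally show ?case using Suc.IH by (cases p) (auto simp: algebra_simps)
qed

lemma pl_len2: "2 * length (pair_list p) = p * (p - 1)"
proof -
  have "length (pair_list p) = (\<Sum>k<p. p - Suc k)"
    unfolding pair_list_def by (simp add: length_concat sum_list_sum_nth atLeast0LessThan comp_def)
  then show ?thesis using sum_tri by simp
qed

lemma homog:
  fixes f :: "nat \<Rightarrow> 'e \<Rightarrow> real"
  assumes "finite E" "card E > N"
  shows "\<exists>v. (\<exists>e\<in>E. v e \<noteq> 0) \<and> (\<forall>r<N. (\<Sum>e\<in>E. f r e * v e) = 0)"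
  using assms
proof (induction N arbitrary: E f)
  case 0
  then obtain e where "e \<in> E" by fastforce
  then show ?case by (rule_tac x="\<lambda>_. 1" in exI) auto
next
  case (Suc N)
  show ?case
  proof (cases "\<forall>e\<in>E. f N e = 0")
    case True
    from Suc.IH[of E f] Suc.prems obtain v where v: "\<exists>e\<in>E. v e \<noteq> 0" "\<forall>r<N. (\<Sum>e\<in>E. f r e * v e) = 0" by auto
    have "\<forall>r<Suc N. (\<Sum>e\<in>E. f r e * v e) = 0"
      using v(2) True by (auto simp: less_Suc_eq)
    with v(1) show ?thesis by blast
  next
    case False
    then obtain e0 where e0: "e0 \<in> E" "f N e0 \<noteq> 0" by auto
    define E' where "E' = E - {e0}"
    define f' where "f' r e = f r e - f r e0 * f N e / f N e0" for r e
    have "finite E'" "card E' > N" using Suc.prems e0 by (auto simp: E'_def)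
    from Suc.IH[OF this, of f'] obtain v' where v': "\<exists>e\<in>E'. v' e \<noteq> 0" "\<forall>r<N. (\<Sum>e\<in>E'. f' r e * v' e) = 0" by auto
    define v where "v e = (if e = e0 then - (\<Sum>e\<in>E'. f N e * v' e) / f N e0 else v' e)" for e
    have sumE: "(\<Sum>e\<in>E. g e) = g e0 + (\<Sum>e\<in>E'. g e)" for g :: "'e \<Rightarrow> real"
      using e0 Suc.prems(1) unfolding E'_def by (simp add: sum.remove)
    have vE': "(\<Sum>e\<in>E'. h e * v e) = (\<Sum>e\<in>E'. h e * v' e)" for h
      by (rule sum.cong) (auto simp: v_def E'_def)
    have "\<forall>r<Suc N. (\<Sum>e\<in>E. f r e * v e) = 0"
    proof (intro allI impI)
      fix r assume r: "r < Suc N"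
      show "(\<Sum>e\<in>E. f r e * v e) = 0"
      proof (cases "r = N")
        case True
        then show ?thesis unfolding sumE vE' using e0 by (simp add: v_def)
      next
        case False
        then have "r < N" using r by simp
        have "(\<Sum>e\<in>E'. f' r e * v' e) = (\<Sum>e\<in>E'. f r e * v' e) - f r e0 / f N e0 * (\<Sum>e\<in>E'. f N e * v' e)"
          unfolding f'_def by (simp add: algebra_simps sum_subtractf sum_distrib_left sum_divide_distrib)
        then show ?thesis unfolding sumE vE' using v'(2) \<open>r < N\<close> by (simp add: v_def)
      qed
    qed
    moreover have "\<exists>e\<in>E. v e \<noteq> 0" using v'(1) by (auto simp: v_def E'_def)
    ultimately show ?thesis by blast
  qed
qed

lemma swapcard:
  fixes Om :: "real mat"
  assumes sym: "\<And>a b. a < p \<Longrightarrow> b < p \<Longrightarrow> Om $$ (a,b) = Om $$ (b,a)"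
  shows "card ({x. Om $$ x \<noteq> 0} \<inter> {(i, j). j < i \<and> i < p}) = card ({x. Om $$ x \<noteq> 0} \<inter> {(k, l). k < l \<and> l < p})"
proof (rule bij_betw_same_card[of prod.swap])
  have "prod.swap ` ({x. Om $$ x \<noteq> 0} \<inter> {(i, j). j < i \<and> i < p}) = {x. Om $$ x \<noteq> 0} \<inter> {(k, l). k < l \<and> l < p}"
  proof (intro equalityI subsetI)
    fix x assume "x \<in> {x. Om $$ x \<noteq> 0} \<inter> {(k, l). k < l \<and> l < p}"
    then obtain k l where x: "x = (k,l)" "k < l" "l < p" "Om $$ (k,l) \<noteq> 0" by blast
    have "Om $$ (l,k) \<noteq> 0" using x(2-4) sym[of k l] by linarith
    then have "(l,k) \<in> {x. Om $$ x \<noteq> 0} \<inter> {(i, j). j < i \<and> i < p}" using x by blast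
    moreover have "x = prod.swap (l,k)" using x by simp
    ultimately show "x \<in> prod.swap ` ({x. Om $$ x \<noteq> 0} \<inter> {(i, j). j < i \<and> i < p})"
      by blast
  next
    fix x assume "x \<in> prod.swap ` ({x. Om $$ x \<noteq> 0} \<inter> {(i, j). j < i \<and> i < p})"
    then obtain i j where x: "x = (j,i)" "j < i" "i < p" "Om $$ (i,j) \<noteq> 0" by force
    have "Om $$ (j,i) \<noteq> 0" using x(2-4) sym[of i j] by linarith
    then show "x \<in> {x. Om $$ x \<noteq> 0} \<inter> {(k, l). k < l \<and> l < p}" using x by blast
  qed
  moreover have "inj_on prod.swap A" for A :: "(nat*nat) set" by (auto simp: inj_on_def)
  ultimately show "bij_betw prod.swap ({x. Om $$ x \<noteq> 0} \<inter> {(i, j). j < i \<and> i < p}) ({x. Om $$ x \<noteq> 0} \<inter> {(k, l). k < l \<and> l < p})"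
    unfolding bij_betw_def by blast
qed

lemma card_vech:
  assumes Om: "Om \<in> carrier_mat p p" and sym: "\<And>a b. a < p \<Longrightarrow> b < p \<Longrightarrow> Om $$ (a,b) = Om $$ (b,a)"
  shows "card_vec (vech Om) = card {c. c < length (pair_list p) \<and> Om $$ (pair_list p ! c) \<noteq> 0}"
proof -
  define LP where "LP = concat (map (\<lambda>i. map (Pair i) [0..<i]) [0..<p])"
  have vech: "vech Om = vec_of_list (map (\<lambda>x. Om $$ x) LP)"
    using Om unfolding vech_def LP_def by (simp add: map_concat comp_def)
  have dLP: "distinct LP" unfolding LP_def
    by (rule distinct_concat_map) (auto simp: distinct_map inj_on_def)
  have sLP: "set LP = {(i,j). j < i \<and> i < p}" unfolding LP_def by force
  have "card_vec (vech Om) = length (filter (\<lambda>x. x \<noteq> 0) (map (\<lambda>x. Om $$ x) LP))"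
    unfolding vech card_vec_def length_filter_conv_card by (simp del: vec_of_list_map add: vec_of_list_index)
  also have "\<dots> = card ({x. Om $$ x \<noteq> 0} \<inter> set LP)"
    using dLP by (simp add: distinct_length_filter comp_def)
  also have "\<dots> = card ({x. Om $$ x \<noteq> 0} \<inter> set (pair_list p))"
    unfolding sLP pl_set using swapcard[of p Om] sym by blast
  also have "\<dots> = length (filter (\<lambda>x. Om $$ x \<noteq> 0) (pair_list p))"
    using pl_distinct by (simp add: distinct_length_filter)
  also have "\<dots> = card {c. c < length (pair_list p) \<and> Om $$ (pair_list p ! c) \<noteq> 0}"
    by (rule length_filter_conv_card)
  finally show ?thesis .
qed


lemma pert_X:
  assumes X: "X \<in> carrier_mat n p" and C: "C \<subseteq> {..<length (pair_list p)}" and i: "i < n" and b: "b < p"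
  shows "(\<Sum>a<p. X $$ (i,a) * pert p Om t C u $$ (a,b)) =
    (\<Sum>a<p. X $$ (i,a) * Om $$ (a,b)) - t * (\<Sum>c\<in>C. u c * A_mat X $$ (b*n+i, c))"
proof -
  have r: "b*n+i < n*p"
  proof -
    have "b*n+i < (b+1)*n" using i by simp
    also have "\<dots> \<le> p*n" using b by (intro mult_le_mono1) simp
    finally show ?thesis by (simp add: mult.commute)
  qed
  have dm: "(b*n+i) div n = b" "(b*n+i) mod n = i" using i by auto
  have inner: "(\<Sum>a<p. X $$ (i,a) * ((if pair_list p ! c = (a,b) then 1 else 0) + (if pair_list p ! c = (b,a) then 1 else 0)))
      = - A_mat X $$ (b*n+i, c)" if c: "c \<in> C" for c
  proof -
    have cL: "c < length (pair_list p)" using c C by auto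
    obtain k l where kl: "pair_list p ! c = (k,l)" by fastforce
    with pl_nth[OF cL] have kl': "k < l" "l < p" by auto
    have "(\<Sum>a<p. X $$ (i,a) * ((if pair_list p ! c = (a,b) then 1 else 0) + (if pair_list p ! c = (b,a) then 1 else 0)))
       = (\<Sum>a<p. (if a = k then (if b = l then X $$ (i,a) else 0) else 0) + (if a = l then (if b = k then X $$ (i,a) else 0) else 0))"
      unfolding kl by (intro sum.cong refl) auto
    also have "\<dots> = (if b = l then X $$ (i,k) else 0) + (if b = k then X $$ (i,l) else 0)"
      using kl' by (simp add: sum.distrib)
    also have "\<dots> = - A_mat X $$ (b*n+i, c)"
      using A_entry[OF X r cL] kl kl' dm by auto
    finally show ?thesis .
  qed
  have "(\<Sum>a<p. X $$ (i,a) * pert p Om t C u $$ (a,b)) = (\<Sum>a<p. X $$ (i,a) * Om $$ (a,b)) + t * (\<Sum>a<p. X $$ (i,a) * Vf p C u a b)"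
    using b by (simp add: pert_def algebra_simps sum.distrib sum_distrib_left)
  also have "(\<Sum>a<p. X $$ (i,a) * Vf p C u a b) = (\<Sum>c\<in>C. u c * (\<Sum>a<p. X $$ (i,a) * ((if pair_list p ! c = (a,b) then 1 else 0) + (if pair_list p ! c = (b,a) then 1 else 0))))"
    unfolding Vf_def by (simp add: sum_distrib_left sum_distrib_right mult.left_commute sum.swap[of _ C])
  also have "\<dots> = - (\<Sum>c\<in>C. u c * A_mat X $$ (b*n+i, c))"
    by (simp add: inner sum_negf[symmetric])
  finally show ?thesis by simp
qed

lemma sym_entries: "Om \<in> carrier_mat p p \<Longrightarrow> transpose_mat Om = Om \<Longrightarrow> a < p \<Longrightarrow> b < p \<Longrightarrow> Om $$ (a,b) = Om $$ (b,a)"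
  by (metis carrier_matD index_transpose_mat(1))

lemma obj_pert:
  assumes X: "X \<in> carrier_mat n p" and n: "n > 0" and Om: "Om \<in> carrier_mat p p"
    and sym: "transpose_mat Om = Om" and C: "C \<subseteq> {..<length (pair_list p)}"
  shows "concord_obj X lam1 (pert p Om t C u) = - (1/2) * ln (det (diag_part Om * diag_part Om))
     + (1/2) * (\<Sum>b<p. \<Sum>i<n. ((\<Sum>a<p. X $$ (i,a) * Om $$ (a,b)) - t * (\<Sum>c\<in>C. u c * A_mat X $$ (b*n+i, c)))\<^sup>2)
     + lam1 * (2 * (\<Sum>c<length (pair_list p). \<bar>Om $$ (pair_list p ! c) + t * (if c \<in> C then u c else 0)\<bar>))"
proof -
  let ?P = "pert p Om t C u"
  have P: "?P \<in> carrier_mat p p" by (rule pert_carrier)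
  have Ps: "transpose_mat ?P = ?P" by (rule pert_sym[OF Om sym])
  have "concord_obj X lam1 ?P = - (1/2) * ln (det (diag_part ?P * diag_part ?P))
     + (1/2) * (\<Sum>b<p. \<Sum>i<n. (\<Sum>a<p. X $$ (i,a) * ?P $$ (a,b))\<^sup>2)
     + lam1 * (\<Sum>a<p. \<Sum>b<p. if a = b then 0 else \<bar>?P $$ (a,b)\<bar>)"
    by (rule obj_formula[OF X n P]) (rule sym_entries[OF P Ps])
  also have "diag_part ?P = diag_part Om" by (rule pert_diag[OF Om C])
  also have "(\<Sum>b<p. \<Sum>i<n. (\<Sum>a<p. X $$ (i,a) * ?P $$ (a,b))\<^sup>2) =
      (\<Sum>b<p. \<Sum>i<n. ((\<Sum>a<p. X $$ (i,a) * Om $$ (a,b)) - t * (\<Sum>c\<in>C. u c * A_mat X $$ (b*n+i, c)))\<^sup>2)"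
    by (intro sum.cong refl) (simp add: pert_X[OF X C])
  also have "(\<Sum>a<p. \<Sum>b<p. if a = b then 0 else \<bar>?P $$ (a,b)\<bar>) = 2 * (\<Sum>c<length (pair_list p). \<bar>?P $$ (pair_list p ! c)\<bar>)"
    using offdiag_sum[of p "\<lambda>x. \<bar>?P $$ x\<bar>"] sym_entries[OF P Ps] by simp
  also have "(\<Sum>c<length (pair_list p). \<bar>?P $$ (pair_list p ! c)\<bar>) = (\<Sum>c<length (pair_list p). \<bar>Om $$ (pair_list p ! c) + t * (if c \<in> C then u c else 0)\<bar>)"
    by (intro sum.cong refl) (simp add: pert_pl[OF C])
  finally show ?thesis .
qed

lemma pert_zero: "Om \<in> carrier_mat p p \<Longrightarrow> pert p Om 0 C u = Om"
  unfolding pert_def by (intro eq_matI) auto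

lemma pert_admissible:
  assumes Om: "admissible p Om" and C: "C \<subseteq> {..<length (pair_list p)}"
  shows "admissible p (pert p Om t C u)"
  using Om pert_diag[OF _ C] pert_carrier unfolding admissible_def by simp

lemma quad_zero:
  fixes \<alpha> K \<delta> :: real
  assumes d: "\<delta> > 0" and K: "K \<ge> 0" and h: "\<And>t. \<bar>t\<bar> < \<delta> \<Longrightarrow> 0 \<le> t * \<alpha> + t\<^sup>2 * K"
  shows "\<alpha> = 0"
proof (rule ccontr)
  assume a: "\<alpha> \<noteq> 0"
  define \<epsilon> where "\<epsilon> = min (\<delta> / (2 * \<bar>\<alpha>\<bar>)) (1 / (2 * K + 2))"
  have e0: "\<epsilon> > 0" using a d K by (simp add: \<epsilon>_def)
  have e1: "\<epsilon> * \<bar>\<alpha>\<bar> < \<delta>"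
  proof -
    have "\<epsilon> * \<bar>\<alpha>\<bar> \<le> \<delta> / (2 * \<bar>\<alpha>\<bar>) * \<bar>\<alpha>\<bar>" unfolding \<epsilon>_def by (intro mult_right_mono) auto
    also have "\<dots> = \<delta> / 2" using a by simp
    finally show ?thesis using d by simp
  qed
  have e2: "\<epsilon> * K < 1"
  proof -
    have "\<epsilon> * K \<le> 1 / (2 * K + 2) * K" unfolding \<epsilon>_def using K by (intro mult_right_mono) auto
    also have "\<dots> < 1" using K by (simp add: field_simps)
    finally show ?thesis .
  qed
  define t where "t = - \<alpha> * \<epsilon>"
  have "\<bar>t\<bar> < \<delta>" using e1 e0 by (simp add: t_def abs_mult mult.commute)
  then have "0 \<le> t * \<alpha> + t\<^sup>2 * K" by (rule h)
  also have "t * \<alpha> + t\<^sup>2 * K = \<alpha>\<^sup>2 * \<epsilon> * (\<epsilon> * K - 1)"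
    by (simp add: t_def power2_eq_square algebra_simps)
  also have "\<dots> < 0"
  proof -
    have "\<alpha>\<^sup>2 * \<epsilon> > 0" using a e0 by simp
    moreover have "\<epsilon> * K - 1 < 0" using e2 by simp
    ultimately show ?thesis by (simp add: mult_pos_neg)
  qed
  finally show False by simp
qed

lemma sum_upd:
  fixes f :: "nat \<Rightarrow> real"
  assumes "finite A" "c \<in> A"
  shows "(\<Sum>x\<in>A. if x = c then y else f x) = (\<Sum>x\<in>A. f x) + (y - f c)"
proof -
  have "(\<Sum>x\<in>A. if x = c then y else f x) = y + (\<Sum>x\<in>A - {c}. if x = c then y else f x)"
    using assms by (simp add: sum.remove)
  also have "(\<Sum>x\<in>A - {c}. if x = c then y else f x) = (\<Sum>x\<in>A - {c}. f x)" by (rule sum.cong) auto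
  also have "(\<Sum>x\<in>A. f x) = f c + (\<Sum>x\<in>A - {c}. f x)" using assms by (simp add: sum.remove)
  ultimately show ?thesis by simp
qed

lemma kkt:
  assumes X: "X \<in> carrier_mat n p" and n: "n > 0" and conc: "is_concord X lam1 Om"
    and c: "c < length (pair_list p)" and bc: "Om $$ (pair_list p ! c) \<noteq> 0"
  shows "(\<Sum>b<p. \<Sum>i<n. A_mat X $$ (b*n+i, c) * (\<Sum>a<p. X $$ (i,a) * Om $$ (a,b))) = 2 * lam1 * sgn (Om $$ (pair_list p ! c))"
proof -
  have pX: "dim_col X = p" using X by simp
  have adm: "admissible p Om" and sym: "transpose_mat Om = Om"
    and minim: "\<And>Om'. admissible p Om' \<Longrightarrow> transpose_mat Om' = Om' \<Longrightarrow> concord_obj X lam1 Om \<le> concord_obj X lam1 Om'"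
    using conc unfolding is_concord_def pX by auto
  have Om: "Om \<in> carrier_mat p p" using adm unfolding admissible_def by simp
  have C: "{c} \<subseteq> {..<length (pair_list p)}" using c by simp
  define w where "w b i = (\<Sum>a<p. X $$ (i,a) * Om $$ (a,b))" for b i
  define av where "av b i = A_mat X $$ (b*n+i, c)" for b i
  define \<beta> where "\<beta> = Om $$ (pair_list p ! c)"
  define LD where "LD = - (1/2) * ln (det (diag_part Om * diag_part Om))"
  define B where "B = (\<Sum>c'<length (pair_list p). \<bar>Om $$ (pair_list p ! c')\<bar>)"
  define W2 where "W2 = (\<Sum>b<p. \<Sum>i<n. (w b i)\<^sup>2)"
  define AW where "AW = (\<Sum>b<p. \<Sum>i<n. av b i * w b i)"
  define A2 where "A2 = (\<Sum>b<p. \<Sum>i<n. (av b i)\<^sup>2)"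
  have F: "concord_obj X lam1 (pert p Om t {c} (\<lambda>_. 1)) = LD + (1/2) * (W2 - 2 * t * AW + t\<^sup>2 * A2) + lam1 * (2 * (B + (\<bar>\<beta> + t\<bar> - \<bar>\<beta>\<bar>)))" for t
  proof -
    have q: "(\<Sum>b<p. \<Sum>i<n. ((\<Sum>a<p. X $$ (i,a) * Om $$ (a,b)) - t * (\<Sum>c'\<in>{c}. 1 * A_mat X $$ (b*n+i, c')))\<^sup>2)
        = W2 - 2 * t * AW + t\<^sup>2 * A2"
    proof -
      have "(\<Sum>b<p. \<Sum>i<n. ((\<Sum>a<p. X $$ (i,a) * Om $$ (a,b)) - t * (\<Sum>c'\<in>{c}. 1 * A_mat X $$ (b*n+i, c')))\<^sup>2)
         = (\<Sum>b<p. \<Sum>i<n. (w b i - t * av b i)\<^sup>2)" by (simp add: w_def av_def)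
      also have "\<dots> = (\<Sum>b<p. \<Sum>i<n. (w b i)\<^sup>2 - 2 * t * (av b i * w b i) + t\<^sup>2 * (av b i)\<^sup>2)"
        by (intro sum.cong refl) (simp add: power2_eq_square algebra_simps)
      also have "\<dots> = W2 - 2 * t * AW + t\<^sup>2 * A2"
        unfolding W2_def AW_def A2_def by (simp add: sum.distrib sum_subtractf sum_distrib_left)
      finally show ?thesis .
    qed
    have l: "(\<Sum>c'<length (pair_list p). \<bar>Om $$ (pair_list p ! c') + t * (if c' \<in> {c} then 1 else 0)\<bar>) = B + (\<bar>\<beta> + t\<bar> - \<bar>\<beta>\<bar>)"
    proof -
      have "(\<Sum>c'<length (pair_list p). \<bar>Om $$ (pair_list p ! c') + t * (if c' \<in> {c} then 1 else 0)\<bar>)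
          = (\<Sum>c'<length (pair_list p). if c' = c then \<bar>\<beta> + t\<bar> else \<bar>Om $$ (pair_list p ! c')\<bar>)"
        by (intro sum.cong refl) (auto simp: \<beta>_def)
      also have "\<dots> = B + (\<bar>\<beta> + t\<bar> - \<bar>\<beta>\<bar>)" unfolding B_def \<beta>_def using c by (subst sum_upd) auto
      finally show ?thesis .
    qed
    show ?thesis unfolding obj_pert[OF X n Om sym C] q l LD_def by simp
  qed
  have "\<And>t. \<bar>t\<bar> < \<bar>\<beta>\<bar> \<Longrightarrow> 0 \<le> t * (2 * lam1 * sgn \<beta> - AW) + t\<^sup>2 * (A2 / 2)"
  proof -
    fix t :: real assume t: "\<bar>t\<bar> < \<bar>\<beta>\<bar>"
    have ab: "\<bar>\<beta> + t\<bar> - \<bar>\<beta>\<bar> = sgn \<beta> * t"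
      using t bc unfolding \<beta>_def[symmetric] by (cases "\<beta> > 0") (auto simp: abs_if sgn_if)
    have "concord_obj X lam1 (pert p Om 0 {c} (\<lambda>_. 1)) \<le> concord_obj X lam1 (pert p Om t {c} (\<lambda>_. 1))"
      unfolding pert_zero[OF Om] by (intro minim pert_admissible[OF adm C] pert_sym[OF Om sym])
    then show "0 \<le> t * (2 * lam1 * sgn \<beta> - AW) + t\<^sup>2 * (A2 / 2)"
      unfolding F ab by (simp add: algebra_simps)
  qed
  moreover have "A2 / 2 \<ge> 0" unfolding A2_def by (simp add: sum_nonneg)
  moreover have "\<bar>\<beta>\<bar> > 0" using bc \<beta>_def by simp
  ultimately have "2 * lam1 * sgn \<beta> - AW = 0" using quad_zero by blast
  then show ?thesis unfolding AW_def av_def w_def \<beta>_def by simp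
qed

lemma part3:
  assumes X: "X \<in> carrier_mat n p" and n: "n > 0" and lam: "lam1 > 0" and conc: "is_concord X lam1 Om"
    and gp: "general_position (A_mat X)"
  shows "card {c. c < length (pair_list p) \<and> Om $$ (pair_list p ! c) \<noteq> 0} \<le> n * p"
proof (rule ccontr)
  define S where "S = {c. c < length (pair_list p) \<and> Om $$ (pair_list p ! c) \<noteq> 0}"
  assume "\<not> card {c. c < length (pair_list p) \<and> Om $$ (pair_list p ! c) \<noteq> 0} \<le> n * p"
  then have cS: "card S \<ge> n * p + 1" unfolding S_def by simp
  obtain E where E: "E \<subseteq> S" "card E = n * p + 1" using obtain_subset_with_card_n[OF cS] by metis
  have finS: "finite S" unfolding S_def by simp
  have finE: "finite E" using finite_subset[OF E(1) finS] .
  from homog[OF finE, of "n*p" "\<lambda>r c. A_mat X $$ (r,c)"] E(2)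
  obtain v where v: "\<exists>e\<in>E. v e \<noteq> 0" "\<And>r. r < n*p \<Longrightarrow> (\<Sum>c\<in>E. A_mat X $$ (r,c) * v c) = 0" by auto
  define w where "w b i = (\<Sum>a<p. X $$ (i,a) * Om $$ (a,b))" for b i
  define s where "s c = sgn (Om $$ (pair_list p ! c))" for c
  have sE: "s c = 1 \<or> s c = -1" if "c \<in> E" for c
    using that E(1) unfolding s_def S_def by (auto simp: sgn_if)
  have s2: "s c * s c = 1" if "c \<in> E" for c using sE[OF that] by auto
  have kk: "(\<Sum>b<p. \<Sum>i<n. A_mat X $$ (b*n+i, c) * w b i) = 2 * lam1 * s c" if "c \<in> E" for c
    using kkt[OF X n conc, of c] that E(1) unfolding S_def s_def w_def by auto
  have r_lt: "b*n+i < n*p" if "i < n" "b < p" for b i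
  proof -
    have "b*n+i < (b+1)*n" using that by simp
    also have "\<dots> \<le> p*n" using that by (intro mult_le_mono1) simp
    finally show ?thesis by (simp add: mult.commute)
  qed
  have "(\<Sum>c\<in>E. v c * (2 * lam1 * s c)) = (\<Sum>c\<in>E. v c * (\<Sum>b<p. \<Sum>i<n. A_mat X $$ (b*n+i, c) * w b i))"
    by (intro sum.cong refl) (simp add: kk)
  also have "\<dots> = (\<Sum>b<p. \<Sum>i<n. w b i * (\<Sum>c\<in>E. A_mat X $$ (b*n+i, c) * v c))"
    by (simp add: sum_distrib_left sum_distrib_right sum.swap[of _ E] mult.commute mult.left_commute)
  also have "\<dots> = 0" using v(2) r_lt by (intro sum.neutral ballI) simp
  finally have "2 * lam1 * (\<Sum>c\<in>E. v c * s c) = 0" by (simp add: sum_distrib_left mult.commute mult.left_commute)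
  then have vs: "(\<Sum>c\<in>E. v c * s c) = 0" using lam by simp
  obtain j where j: "j \<in> E" "v j \<noteq> 0" using v(1) by blast
  define I where "I = E - {j}"
  define d where "d c = - v c * s c * s j / v j" for c
  have dimA: "dim_row (A_mat X) = n * p" "dim_col (A_mat X) = length (pair_list p)" using A_dims[OF X] by auto
  have "I \<subseteq> {..<dim_col (A_mat X)}" using E(1) unfolding I_def S_def dimA by auto
  moreover have "card I \<le> dim_row (A_mat X)" unfolding I_def dimA using E(2) j(1) finE by simp
  moreover have "\<forall>i\<in>I. s i = 1 \<or> s i = -1" using sE unfolding I_def by auto
  moreover have "j < dim_col (A_mat X)" using E(1) j(1) unfolding S_def dimA by auto
  moreover have "j \<notin> I" unfolding I_def by simp
  moreover have "s j = 1 \<or> s j = -1" using sE j(1) by simp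
  moreover have "(\<Sum>i\<in>I. d i) = 1"
  proof -
    have "(\<Sum>i\<in>I. d i) = - s j / v j * (\<Sum>i\<in>I. v i * s i)"
      unfolding d_def by (simp add: sum_distrib_left sum_divide_distrib algebra_simps)
    also have "(\<Sum>i\<in>I. v i * s i) = - v j * s j"
      using vs sum.remove[OF finE j(1), of "\<lambda>c. v c * s c"] unfolding I_def by simp
    finally show ?thesis using j(2) s2[OF j(1)] by (simp add: field_simps)
  qed
  moreover have "\<forall>r<dim_row (A_mat X). s j * A_mat X $$ (r, j) = (\<Sum>i\<in>I. d i * (s i * A_mat X $$ (r, i)))"
  proof (intro allI impI)
    fix r assume "r < dim_row (A_mat X)"
    then have r: "r < n * p" using dimA by simp
    have "(\<Sum>i\<in>I. d i * (s i * A_mat X $$ (r, i))) = (\<Sum>i\<in>I. (- s j / v j) * (A_mat X $$ (r, i) * v i))"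
      by (intro sum.cong refl) (auto simp: d_def I_def s2[symmetric] field_simps dest: s2)
    also have "\<dots> = (- s j / v j) * (\<Sum>i\<in>I. A_mat X $$ (r, i) * v i)" by (simp add: sum_distrib_left)
    also have "(\<Sum>i\<in>I. A_mat X $$ (r, i) * v i) = - A_mat X $$ (r, j) * v j"
      using v(2)[OF r] sum.remove[OF finE j(1), of "\<lambda>c. A_mat X $$ (r, c) * v c"] unfolding I_def by simp
    finally show "s j * A_mat X $$ (r, j) = (\<Sum>i\<in>I. d i * (s i * A_mat X $$ (r, i)))" using j(2) by simp
  qed
  ultimately show False using gp unfolding general_position_def by blast
qed

lemma abs_move:
  fixes \<beta> u t :: real
  assumes b: "\<beta> \<noteq> 0" and t: "t \<ge> 0" and h: "sgn \<beta> * u < 0 \<Longrightarrow> t * \<bar>u\<bar> \<le> \<bar>\<beta>\<bar>"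
  shows "\<bar>\<beta> + t * u\<bar> = \<bar>\<beta>\<bar> + t * (sgn \<beta> * u)"
proof (cases "\<beta> > 0")
  case True
  show ?thesis
  proof (cases "u \<ge> 0")
    case True
    then have "t * u \<ge> 0" using t by simp
    then show ?thesis using \<open>\<beta> > 0\<close> by simp
  next
    case False
    then have "t * \<bar>u\<bar> \<le> \<beta>" using h \<open>\<beta> > 0\<close> by simp
    moreover have "t * \<bar>u\<bar> = - (t * u)" using False by simp
    ultimately show ?thesis using \<open>\<beta> > 0\<close> by simp
  qed
next
  case False
  then have bn: "\<beta> < 0" using b by simp
  show ?thesis
  proof (cases "u \<le> 0")
    case True
    then have "t * u \<le> 0" using t by (simp add: mult_nonneg_nonpos)
    then show ?thesis using bn by simp
  next
    case False
    then have "t * \<bar>u\<bar> \<le> - \<beta>" using h bn by simp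
    moreover have "t * \<bar>u\<bar> = t * u" using False by simp
    ultimately show ?thesis using bn by simp
  qed
qed

lemma part2_step:
  assumes X: "X \<in> carrier_mat n p" and n: "n > 0" and lam: "lam1 > 0" and conc: "is_concord X lam1 Om"
    and big: "card {c. c < length (pair_list p) \<and> Om $$ (pair_list p ! c) \<noteq> 0} > n * p"
  shows "\<exists>Om'. is_concord X lam1 Om' \<and>
     card {c. c < length (pair_list p) \<and> Om' $$ (pair_list p ! c) \<noteq> 0} < card {c. c < length (pair_list p) \<and> Om $$ (pair_list p ! c) \<noteq> 0}"
proof -
  define L where "L = length (pair_list p)"
  define S where "S = {c. c < L \<and> Om $$ (pair_list p ! c) \<noteq> 0}"
  define \<beta> where "\<beta> c = Om $$ (pair_list p ! c)" for c
  define s where "s c = sgn (\<beta> c)" for c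
  have pX: "dim_col X = p" using X by simp
  have adm: "admissible p Om" and sym: "transpose_mat Om = Om"
    and minim: "\<And>Om'. admissible p Om' \<Longrightarrow> transpose_mat Om' = Om' \<Longrightarrow> concord_obj X lam1 Om \<le> concord_obj X lam1 Om'"
    using conc unfolding is_concord_def pX by auto
  have Om: "Om \<in> carrier_mat p p" using adm unfolding admissible_def by simp
  have finS: "finite S" unfolding S_def by simp
  have SL: "S \<subseteq> {..<L}" unfolding S_def by auto
  have cS: "card S > n * p" using big unfolding S_def L_def .
  from homog[OF finS cS, of "\<lambda>r c. A_mat X $$ (r,c)"]
  obtain v where v: "\<exists>e\<in>S. v e \<noteq> 0" "\<And>r. r < n*p \<Longrightarrow> (\<Sum>c\<in>S. A_mat X $$ (r,c) * v c) = 0" by auto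
  define sg :: real where "sg = (if (\<Sum>c\<in>S. s c * v c) > 0 then -1 else 1)"
  define u where "u c = sg * v c" for c
  have u1: "\<exists>e\<in>S. u e \<noteq> 0" using v(1) by (auto simp: u_def sg_def)
  have u2: "(\<Sum>c\<in>S. A_mat X $$ (r,c) * u c) = 0" if "r < n*p" for r
  proof -
    have "(\<Sum>c\<in>S. A_mat X $$ (r,c) * u c) = sg * (\<Sum>c\<in>S. A_mat X $$ (r,c) * v c)"
      unfolding u_def by (simp add: sum_distrib_left mult.left_commute)
    then show ?thesis using v(2)[OF that] by simp
  qed
  have u3: "(\<Sum>c\<in>S. s c * u c) \<le> 0"
  proof -
    have "(\<Sum>c\<in>S. s c * u c) = sg * (\<Sum>c\<in>S. s c * v c)"
      unfolding u_def by (simp add: sum_distrib_left mult.left_commute)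
    then show ?thesis unfolding sg_def by auto
  qed
  have sS: "s c = 1 \<or> s c = -1" if "c \<in> S" for c using that unfolding S_def s_def \<beta>_def by (auto simp: sgn_if)
  define D where "D = {c\<in>S. s c * u c < 0}"
  have finD: "finite D" using finS unfolding D_def by simp
  have Dne: "D \<noteq> {}"
  proof
    assume "D = {}"
    then have nn: "\<forall>c\<in>S. s c * u c \<ge> 0" unfolding D_def by force
    then have "\<forall>c\<in>S. s c * u c = 0" using sum_nonneg_eq_0_iff[OF finS] u3
      by (metis (no_types, lifting) antisym sum_nonneg)
    then have "\<forall>c\<in>S. u c = 0" using sS by fastforce
    then show False using u1 by blast
  qed
  define q where "q c = \<bar>\<beta> c\<bar> / \<bar>u c\<bar>" for c
  define tt where "tt = Min (q ` D)"
  have "tt \<in> q ` D" unfolding tt_def using finD Dne by (intro Min_in) auto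
  then obtain cs where cs: "cs \<in> D" "tt = q cs" by blast
  have ttle: "tt \<le> q c" if "c \<in> D" for c unfolding tt_def using finD that by simp
  have uD: "u c \<noteq> 0" if "c \<in> D" for c using that unfolding D_def by auto
  have bS: "\<beta> c \<noteq> 0" if "c \<in> S" for c using that unfolding S_def \<beta>_def by auto
  have tt0: "tt \<ge> 0" unfolding cs(2) q_def by simp
  define Om' where "Om' = pert p Om tt S u"
  have adm': "admissible p Om'" unfolding Om'_def by (rule pert_admissible[OF adm SL[unfolded L_def]])
  have sym': "transpose_mat Om' = Om'" unfolding Om'_def by (rule pert_sym[OF Om sym])
  have ent: "Om' $$ (pair_list p ! c) = \<beta> c + tt * (if c \<in> S then u c else 0)" if "c < L" for c
    unfolding Om'_def \<beta>_def using pert_pl[OF SL[unfolded L_def]] that L_def by simp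
  have absS: "\<bar>\<beta> c + tt * u c\<bar> = \<bar>\<beta> c\<bar> + tt * (s c * u c)" if "c \<in> S" for c
    unfolding s_def
  proof (rule abs_move[OF bS[OF that] tt0])
    assume "sgn (\<beta> c) * u c < 0"
    then have cD: "c \<in> D" using that unfolding D_def s_def by simp
    have "tt * \<bar>u c\<bar> \<le> q c * \<bar>u c\<bar>" using ttle[OF cD] by (intro mult_right_mono) auto
    also have "\<dots> = \<bar>\<beta> c\<bar>" unfolding q_def using uD[OF cD] by simp
    finally show "tt * \<bar>u c\<bar> \<le> \<bar>\<beta> c\<bar>" .
  qed
  have l1: "(\<Sum>c<L. \<bar>\<beta> c + tt * (if c \<in> S then u c else 0)\<bar>) \<le> (\<Sum>c<L. \<bar>\<beta> c + 0 * (if c \<in> {} then u c else 0)\<bar>)"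
  proof -
    have "(\<Sum>c<L. \<bar>\<beta> c + tt * (if c \<in> S then u c else 0)\<bar>) = (\<Sum>c<L. \<bar>\<beta> c\<bar> + (if c \<in> S then tt * (s c * u c) else 0))"
      by (intro sum.cong refl) (auto simp: absS)
    also have "\<dots> = (\<Sum>c<L. \<bar>\<beta> c\<bar>) + tt * (\<Sum>c\<in>S. s c * u c)"
      using SL by (simp add: sum.distrib sum.If_cases Int_absorb1 sum_distrib_left)
    also have "\<dots> \<le> (\<Sum>c<L. \<bar>\<beta> c\<bar>)" using tt0 u3 by (simp add: mult_nonneg_nonpos)
    finally show ?thesis by simp
  qed
  have quad: "(\<Sum>b<p. \<Sum>i<n. ((\<Sum>a<p. X $$ (i,a) * Om $$ (a,b)) - tt * (\<Sum>c\<in>S. u c * A_mat X $$ (b*n+i, c)))\<^sup>2)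
      = (\<Sum>b<p. \<Sum>i<n. ((\<Sum>a<p. X $$ (i,a) * Om $$ (a,b)) - 0 * (\<Sum>c\<in>{}. u c * A_mat X $$ (b*n+i, c)))\<^sup>2)"
  proof (intro sum.cong refl)
    fix b i assume "b \<in> {..<p}" "i \<in> {..<n}"
    then have "b*n+i < n*p"
    proof -
      assume a: "b \<in> {..<p}" "i \<in> {..<n}"
      have "b*n+i < (b+1)*n" using a by simp
      also have "\<dots> \<le> p*n" using a by (intro mult_le_mono1) simp
      finally show ?thesis by (simp add: mult.commute)
    qed
    then have "(\<Sum>c\<in>S. u c * A_mat X $$ (b*n+i, c)) = 0" using u2 by (simp add: mult.commute)
    then show "((\<Sum>a<p. X $$ (i,a) * Om $$ (a,b)) - tt * (\<Sum>c\<in>S. u c * A_mat X $$ (b*n+i, c)))\<^sup>2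
      = ((\<Sum>a<p. X $$ (i,a) * Om $$ (a,b)) - 0 * (\<Sum>c\<in>{}. u c * A_mat X $$ (b*n+i, c)))\<^sup>2" by simp
  qed
  have "concord_obj X lam1 Om' \<le> concord_obj X lam1 (pert p Om 0 {} u)"
    unfolding Om'_def obj_pert[OF X n Om sym SL[unfolded L_def]] obj_pert[OF X n Om sym empty_subsetI]
    unfolding L_def[symmetric] \<beta>_def[symmetric] quad
    using mult_left_mono[OF l1, of "2*lam1"] lam by (simp add: algebra_simps)
  then have le: "concord_obj X lam1 Om' \<le> concord_obj X lam1 Om" unfolding pert_zero[OF Om] .
  have conc': "is_concord X lam1 Om'"
    unfolding is_concord_def pX using adm' sym' le minim by (meson order_trans)
  have sub: "{c. c < L \<and> Om' $$ (pair_list p ! c) \<noteq> 0} \<subseteq> S - {cs}"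
  proof
    fix c assume c: "c \<in> {c. c < L \<and> Om' $$ (pair_list p ! c) \<noteq> 0}"
    then have "c < L" by simp
    show "c \<in> S - {cs}"
    proof (rule ccontr)
      assume "c \<notin> S - {cs}"
      then consider "c \<notin> S" | "c = cs" by blast
      then have "Om' $$ (pair_list p ! c) = 0"
      proof cases
        case 1 then show ?thesis using ent[OF \<open>c < L\<close>] \<open>c < L\<close> unfolding S_def \<beta>_def by simp
      next
        case 2
        have csD: "cs \<in> D" "cs \<in> S" using cs(1) unfolding D_def by auto
        have "s cs * u cs < 0" using cs(1) unfolding D_def by simp
        then have "\<beta> cs + q cs * u cs = 0"
          unfolding q_def s_def using bS[OF csD(2)] uD[OF csD(1)]
          by (cases "\<beta> cs > 0"; cases "u cs > 0") (auto simp: sgn_if mult_less_0_iff field_simps)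
        then show ?thesis using ent[OF \<open>c < L\<close>] 2 csD cs(2) by simp
      qed
      then show False using c by simp
    qed
  qed
  have "cs \<in> S" using cs(1) unfolding D_def by simp
  then have "card (S - {cs}) < card S" by (rule card_Diff1_less[OF finS])
  then have "card {c. c < L \<and> Om' $$ (pair_list p ! c) \<noteq> 0} < card S"
    using card_mono[OF _ sub] finS by (meson finite_Diff le_less_trans)
  then show ?thesis using conc' unfolding S_def L_def by blast
qed

lemma tri2: "2 * (\<Sum>i<p. i) = p * (p - 1::nat)"
proof (induction p)
  case 0 then show ?case by simp
next
  case (Suc p)
  have "2 * (\<Sum>i<Suc p. i) = 2 * (\<Sum>i<p. i) + 2 * p" by simp
  also have "\<dots> = p * (p - 1) + 2 * p" using Suc.IH by simp
  also have "\<dots> = Suc p * (Suc p - 1)" by (cases p) (auto simp: algebra_simps)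
  finally show ?case .
qed

lemma concord_card:
  assumes X: "X \<in> carrier_mat n p" and conc: "is_concord X lam1 Om"
  shows "card_vec (vech Om) = card {c. c < length (pair_list p) \<and> Om $$ (pair_list p ! c) \<noteq> 0}"
proof -
  have pX: "dim_col X = p" using X by simp
  have Om: "Om \<in> carrier_mat p p" and sym: "transpose_mat Om = Om"
    using conc unfolding is_concord_def admissible_def pX by auto
  show ?thesis by (rule card_vech[OF Om]) (rule sym_entries[OF Om sym])
qed

theorem theorem3:
  fixes X :: "real mat" and n p :: nat and lam1 lam2 :: real
  assumes "X \<in> carrier_mat n p" and "n > 0"
    and "lam1 > 0" and "lam2 > 0"
    and "n * p < p * (p - 1) div 2"
  shows "(\<forall>Om. is_pseudonet X lam1 lam2 Om \<longrightarrow> card_vec (vech Om) \<le> p * (p - 1) div 2)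
    \<and> ((\<exists>Om. is_concord X lam1 Om) \<longrightarrow>
         (\<exists>Om. is_concord X lam1 Om \<and> card_vec (vech Om) \<le> n * p))
    \<and> (general_position (A_mat X) \<longrightarrow>
         (\<forall>Om. is_concord X lam1 Om \<longrightarrow> card_vec (vech Om) \<le> n * p))"
proof (intro conjI allI impI)
  have X: "X \<in> carrier_mat n p" and n: "n > 0" and lam: "lam1 > 0" using assms by auto
  have pX: "dim_col X = p" using X by simp
  fix Om assume "is_pseudonet X lam1 lam2 Om"
  then have Om: "Om \<in> carrier_mat p p" unfolding is_pseudonet_def admissible_def pX by auto
  have "dim_vec (vech Om) = (\<Sum>i<p. i)"
    unfolding vech_def using Om by (simp add: length_concat sum_list_sum_nth atLeast0LessThan comp_def)
  also have "\<dots> = p * (p - 1) div 2" using tri2[of p] by simp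
  finally have d: "dim_vec (vech Om) = p * (p - 1) div 2" .
  have "card_vec (vech Om) \<le> card {..<dim_vec (vech Om)}"
    unfolding card_vec_def by (rule card_mono) auto
  then show "card_vec (vech Om) \<le> p * (p - 1) div 2" using d by simp
next
  have X: "X \<in> carrier_mat n p" and n: "n > 0" and lam: "lam1 > 0" using assms by auto
  assume "\<exists>Om. is_concord X lam1 Om"
  then obtain Om0 where Om0: "is_concord X lam1 Om0" by blast
  have main: "\<forall>Om. is_concord X lam1 Om \<longrightarrow> card {c. c < length (pair_list p) \<and> Om $$ (pair_list p ! c) \<noteq> 0} = m
     \<longrightarrow> (\<exists>Om'. is_concord X lam1 Om' \<and> card_vec (vech Om') \<le> n * p)" for m
  proof (induction m rule: less_induct)
    case (less m)
    show ?case
    proof (intro allI impI)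
      fix Om assume c: "is_concord X lam1 Om" and m: "card {c. c < length (pair_list p) \<and> Om $$ (pair_list p ! c) \<noteq> 0} = m"
      show "\<exists>Om'. is_concord X lam1 Om' \<and> card_vec (vech Om') \<le> n * p"
      proof (cases "m \<le> n * p")
        case True
        then show ?thesis using c m concord_card[OF X c] by auto
      next
        case False
        then obtain Om' where "is_concord X lam1 Om'"
          "card {c. c < length (pair_list p) \<and> Om' $$ (pair_list p ! c) \<noteq> 0} < m"
          using part2_step[OF X n lam c] m by auto
        then show ?thesis using less.IH by blast
      qed
    qed
  qed
  show "\<exists>Om. is_concord X lam1 Om \<and> card_vec (vech Om) \<le> n * p" using main Om0 by blast
next
  have X: "X \<in> carrier_mat n p" and n: "n > 0" and lam: "lam1 > 0" using assms by auto
  fix Om assume gp: "general_position (A_mat X)" and c: "is_concord X lam1 Om"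
  show "card_vec (vech Om) \<le> n * p"
    using part3[OF X n lam c gp] concord_card[OF X c] by simp
qed

end
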